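(* Let $G$ be an abelian group and $A\subseteq G$ a finite set with at least $2$ elements. Then, for each choice of sign, $$\sum_{s\neq 0} |A\pm A_s| \ge 2^{-1} |A|^6 \mathsf{E}_3(A)^{-1} \quad\text{and}\quad \sum_{s\neq 0} \sum_{t\neq 0} |A_s\pm A_t| \ge 4^{-1} |A|^8 \mathsf{E}_4(A)^{-1},$$ where the sums range over $s,t\in (A-A)\setminus\{0\}$. In particular, there exists $s\neq 0$ with $|A-A_s| \ge 2^{-1}|A|^6\mathsf{E}_3(A)^{-1}|A-A|^{-1}$, and there exist $s,t\neq 0$ with $|A_s-A_t| \ge 4^{-1}|A|^8\mathsf{E}_4(A)^{-1}|A-A|^{-2}$.
   Context: For finite $A\subseteq G$, $(A\circ A)(x)=|\{y: y\in A,\ y+x\in A\}|$; for $s\in G$, $A_s=A\cap(A-s)$. $\mathsf{E}_3(A)=\sum_s (A\circ A)(s)^3$ and $\mathsf{E}_4(A)=\sum_s (A\circ A)(s)^4$. $X\pm Y$ denotes $\{x\pm y: x\in X, y\in Y\}$. *)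

theory Defs
  imports Complex_Main
begin

definition sumset :: "'a::ab_group_add set \<Rightarrow> 'a set \<Rightarrow> 'a set" where
  "sumset X Y = {x + y | x y. x \<in> X \<and> y \<in> Y}"

definition diffset :: "'a::ab_group_add set \<Rightarrow> 'a set \<Rightarrow> 'a set" where
  "diffset X Y = {x - y | x y. x \<in> X \<and> y \<in> Y}"

definition rep :: "'a::ab_group_add set \<Rightarrow> 'a \<Rightarrow> nat" where
  "rep A x = card {y. y \<in> A \<and> y + x \<in> A}"

definition Ash :: "'a::ab_group_add set \<Rightarrow> 'a \<Rightarrow> 'a set" where
  "Ash A s = A \<inter> ((\<lambda>a. a - s) ` A)"

(* The sums over s \<in> G are taken over A - A, outside of which rep A vanishes. *)
definition E3 :: "'a::ab_group_add set \<Rightarrow> nat" where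
  "E3 A = (\<Sum>s\<in>diffset A A. rep A s ^ 3)"

definition E4 :: "'a::ab_group_add set \<Rightarrow> nat" where
  "E4 A = (\<Sum>s\<in>diffset A A. rep A s ^ 4)"

end

theory Submission
  imports Defs "HOL-Analysis.Convex"
begin

lemma fiber_cs:
  assumes "finite S"
  shows "real (card S)^2 \<le> real (card (f ` S)) * (\<Sum>p\<in>S. \<Sum>q\<in>S. if f p = f q then 1 else 0)"
proof -
  define c where "c z = (\<Sum>p\<in>S. if f p = z then 1 else (0::real))" for z
  have 1: "real (card S) = (\<Sum>z\<in>f`S. c z)"
  proof -
    have "real (card S) = (\<Sum>p\<in>S. (1::real))" by simp
    also have "\<dots> = (\<Sum>z\<in>f`S. \<Sum>p\<in>{x. x \<in> S \<and> f x = z}. 1)"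
      by (rule sum.image_gen[OF assms])
    also have "\<dots> = (\<Sum>z\<in>f`S. c z)"
      unfolding c_def by (rule sum.cong[OF refl]) (rule sum.inter_filter[OF assms])
    finally show ?thesis .
  qed
  have 2: "(\<Sum>p\<in>S. \<Sum>q\<in>S. if f p = f q then 1 else 0) = (\<Sum>z\<in>f`S. (c z)^2)"
  proof -
    have "(\<Sum>p\<in>S. \<Sum>q\<in>S. if f p = f q then 1 else (0::real)) = (\<Sum>p\<in>S. c (f p))"
      unfolding c_def by (intro sum.cong refl) (auto intro: sum.cong)
    also have "\<dots> = (\<Sum>z\<in>f`S. \<Sum>p\<in>{x. x \<in> S \<and> f x = z}. c (f p))"
      by (rule sum.image_gen[OF assms])
    also have "\<dots> = (\<Sum>z\<in>f`S. \<Sum>p\<in>{x. x \<in> S \<and> f x = z}. c z)"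
      by (intro sum.cong refl) auto
    also have "\<dots> = (\<Sum>z\<in>f`S. (c z)^2)"
    proof (intro sum.cong refl)
      fix z assume "z \<in> f ` S"
      have "(\<Sum>p\<in>{x. x \<in> S \<and> f x = z}. c z) = real (card {x. x \<in> S \<and> f x = z}) * c z" by simp
      also have "real (card {x. x \<in> S \<and> f x = z}) = c z"
        unfolding c_def using assms by (simp add: sum.inter_filter[symmetric])
      finally show "(\<Sum>p\<in>{x. x \<in> S \<and> f x = z}. c z) = (c z)^2" by (simp add: power2_eq_square)
    qed
    finally show ?thesis .
  qed
  show ?thesis unfolding 1 2
    using sum_squared_le_sum_of_squares[of c "f`S"] by (simp add: mult.commute)
qed

lemma cs_sum:
  fixes a X N :: "'i \<Rightarrow> real"
  assumes "\<And>i. i \<in> I \<Longrightarrow> 0 \<le> a i" "\<And>i. i \<in> I \<Longrightarrow> 0 \<le> X i" "\<And>i. i \<in> I \<Longrightarrow> 0 \<le> N i"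
    "\<And>i. i \<in> I \<Longrightarrow> (a i)^2 \<le> X i * N i"
  shows "(\<Sum>i\<in>I. a i)^2 \<le> (\<Sum>i\<in>I. X i) * (\<Sum>i\<in>I. N i)"
proof -
  have le: "a i \<le> sqrt (X i) * sqrt (N i)" if "i \<in> I" for i
    using assms[OF that] by (metis real_le_rsqrt real_sqrt_mult)
  have "(\<Sum>i\<in>I. a i) \<le> (\<Sum>i\<in>I. sqrt (X i) * sqrt (N i))"
    by (rule sum_mono) (rule le)
  moreover have "0 \<le> (\<Sum>i\<in>I. a i)" using assms(1) by (simp add: sum_nonneg)
  ultimately have "(\<Sum>i\<in>I. a i)^2 \<le> (\<Sum>i\<in>I. sqrt (X i) * sqrt (N i))^2"
    by (simp add: power_mono)
  also have "\<dots> \<le> (\<Sum>i\<in>I. (sqrt (X i))^2) * (\<Sum>i\<in>I. (sqrt (N i))^2)"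
    by (rule Cauchy_Schwarz_ineq_sum)
  also have "\<dots> = (\<Sum>i\<in>I. X i) * (\<Sum>i\<in>I. N i)"
    using assms(2,3) by (simp cong: sum.cong)
  finally show ?thesis .
qed

lemma ob: "of_bool P * (x::real) = (if P then x else 0)" by simp

lemma Ash_eq: "Ash A s = {b\<in>A. b + s \<in> A}"
proof (rule set_eqI, rule iffI)
  fix b assume "b \<in> Ash A s" then show "b \<in> {b\<in>A. b + s \<in> A}" unfolding Ash_def by auto
next
  fix b assume "b \<in> {b\<in>A. b + s \<in> A}"
  then show "b \<in> Ash A s" unfolding Ash_def by (auto intro: image_eqI[of _ _ "b + s"])
qed

lemma card_Ash: "card (Ash A s) = rep A s"
  unfolding Ash_eq rep_def by (rule arg_cong[where f=card]) auto

lemma rep_neg: "rep A (- d) = rep A d"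
proof -
  have "{y. y \<in> A \<and> y + d \<in> A} = (\<lambda>z. z + - d) ` {z. z \<in> A \<and> z + - d \<in> A}"
  proof (rule set_eqI, rule iffI)
    fix y assume "y \<in> {y. y \<in> A \<and> y + d \<in> A}"
    then show "y \<in> (\<lambda>z. z + - d) ` {z. z \<in> A \<and> z + - d \<in> A}"
      by (intro image_eqI[of _ _ "y + d"]) auto
  next
    fix y assume "y \<in> (\<lambda>z. z + - d) ` {z. z \<in> A \<and> z + - d \<in> A}"
    then show "y \<in> {y. y \<in> A \<and> y + d \<in> A}" by auto
  qed
  moreover have "inj (\<lambda>z::'a. z + - d)" by (rule injI) simp
  ultimately show ?thesis unfolding rep_def
    by (metis (no_types, lifting) card_image inj_on_subset subset_UNIV)
qed

lemma rep_le: "finite A \<Longrightarrow> rep A d \<le> card A"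
  unfolding rep_def by (rule card_mono) auto

lemma rep0: "rep A 0 = card A"
  unfolding rep_def by simp

lemma rep_pos: "b \<in> A \<Longrightarrow> b' \<in> A \<Longrightarrow> finite A \<Longrightarrow> 1 \<le> rep A (b' - b)"
proof -
  assume a: "b \<in> A" "b' \<in> A" "finite A"
  have m: "b \<in> {y. y \<in> A \<and> y + (b' - b) \<in> A}" using a by simp
  have f: "finite {y. y \<in> A \<and> y + (b' - b) \<in> A}" using a(3) by simp
  from m f have "card {y. y \<in> A \<and> y + (b' - b) \<in> A} > 0" by (auto simp: card_gt_0_iff)
  then show ?thesis unfolding rep_def by simp
qed

lemma pair_count:
  fixes F :: "'a::ab_group_add \<Rightarrow> real"
  assumes "finite A"
  shows "(\<Sum>b\<in>A. \<Sum>b'\<in>A. of_bool (b - b' = e) * F (b' - b)) = real (rep A e) * F (- e)"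
proof -
  have "(\<Sum>b\<in>A. \<Sum>b'\<in>A. of_bool (b - b' = e) * F (b' - b))
      = (\<Sum>b'\<in>A. \<Sum>b\<in>A. of_bool (b = b' + e) * F (- e))"
    by (subst sum.swap) (intro sum.cong refl, auto simp: algebra_simps)
  also have "\<dots> = (\<Sum>b'\<in>A. of_bool (b' + e \<in> A) * F (- e))"
    using assms by (intro sum.cong refl) (simp add: ob sum.delta')
  also have "\<dots> = (\<Sum>b'\<in>A. of_bool (b' + e \<in> A)) * F (- e)"
    by (simp add: sum_distrib_right)
  also have "(\<Sum>b'\<in>A. of_bool (b' + e \<in> A)) = real (rep A e)"
    unfolding rep_def using assms
    by (simp add: of_bool_def sum.inter_filter[symmetric] Collect_conj_eq[symmetric])
  finally show ?thesis .
qed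

lemma diffset_finite: "finite A \<Longrightarrow> finite (diffset A A)"
proof -
  assume "finite A"
  have "diffset A A = (\<lambda>(x,y). x - y) ` (A \<times> A)" unfolding diffset_def by auto
  then show ?thesis using \<open>finite A\<close> by simp
qed

lemma grouping:
  fixes G :: "'a::ab_group_add \<Rightarrow> real"
  assumes "finite A"
  shows "(\<Sum>b\<in>A. \<Sum>b'\<in>A. G (b' - b)) = (\<Sum>d\<in>diffset A A. real (rep A d) * G d)"
proof -
  have fin: "finite (diffset A A)" using diffset_finite[OF assms] .
  have "(\<Sum>b\<in>A. \<Sum>b'\<in>A. G (b' - b)) = (\<Sum>b\<in>A. \<Sum>b'\<in>A. \<Sum>d\<in>diffset A A. of_bool (b - b' = - d) * G d)"
  proof (intro sum.cong refl)
    fix b b' assume "b \<in> A" "b' \<in> A"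
    then have "b' - b \<in> diffset A A" unfolding diffset_def by blast
    moreover have "\<And>d. (b - b' = - d) = (d = b' - b)" by (auto simp: algebra_simps)
    ultimately show "G (b' - b) = (\<Sum>d\<in>diffset A A. of_bool (b - b' = - d) * G d)"
      using fin by (simp add: ob sum.delta')
  qed
  also have "\<dots> = (\<Sum>d\<in>diffset A A. \<Sum>b\<in>A. \<Sum>b'\<in>A. of_bool (b - b' = - d) * G d)"
    by (subst sum.swap) (subst (2) sum.swap, rule refl)
  also have "\<dots> = (\<Sum>d\<in>diffset A A. real (rep A d) * G d)"
    using pair_count[OF assms, of "- d" "\<lambda>_. G d" for d] by (simp add: rep_neg)
  finally show ?thesis .
qed

lemma count_s:
  assumes "finite A" "b \<in> A" "b' \<in> A"
  shows "(\<Sum>s\<in>diffset A A - {0}. of_bool (b + s \<in> A \<and> b' + s \<in> A)) = real (rep A (b' - b)) - 1"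
proof -
  let ?D = "diffset A A - {0}"
  have fin: "finite ?D" using diffset_finite[OF assms(1)] by simp
  have "(\<Sum>s\<in>?D. of_bool (b + s \<in> A \<and> b' + s \<in> A) :: real) = real (card {s\<in>?D. b + s \<in> A \<and> b' + s \<in> A})"
    using fin by (simp add: of_bool_def sum.inter_filter[symmetric])
  also have "{s\<in>?D. b + s \<in> A \<and> b' + s \<in> A} = (\<lambda>c. c - b) ` {c\<in>A. c \<noteq> b \<and> c + (b' - b) \<in> A}"
  proof (rule set_eqI, rule iffI)
    fix s assume "s \<in> {s\<in>?D. b + s \<in> A \<and> b' + s \<in> A}"
    then have s: "b + s \<in> A" "b' + s \<in> A" "s \<noteq> 0" by auto
    show "s \<in> (\<lambda>c. c - b) ` {c\<in>A. c \<noteq> b \<and> c + (b' - b) \<in> A}"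
      apply (rule image_eqI[of _ _ "b + s"])
      using s by (auto simp: algebra_simps)
  next
    fix s assume "s \<in> (\<lambda>c. c - b) ` {c\<in>A. c \<noteq> b \<and> c + (b' - b) \<in> A}"
    then obtain c where c: "c \<in> A" "c \<noteq> b" "c + (b' - b) \<in> A" and sc: "s = c - b" by auto
    have "c - b \<in> diffset A A" unfolding diffset_def using c assms by blast
    moreover have "c - b \<noteq> 0" using c by simp
    moreover have "b + (c - b) \<in> A" using c by simp
    moreover have "b' + (c - b) \<in> A" using c(3) by (simp add: algebra_simps)
    ultimately show "s \<in> {s\<in>?D. b + s \<in> A \<and> b' + s \<in> A}" using sc by simp
  qed
  also have "card \<dots> = card {c\<in>A. c \<noteq> b \<and> c + (b' - b) \<in> A}"
    by (rule card_image) (auto intro: inj_onI)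
  also have "{c\<in>A. c \<noteq> b \<and> c + (b' - b) \<in> A} = {c\<in>A. c + (b' - b) \<in> A} - {b}" by auto
  also have "card \<dots> = rep A (b' - b) - 1"
    unfolding rep_def using assms by (subst card_Diff_singleton) auto
  also have "real (rep A (b' - b) - 1) = real (rep A (b' - b)) - 1"
    using rep_pos[OF assms(2,3,1)] by simp
  finally show ?thesis .
qed

lemma sum_prod: "(\<Sum>p\<in>X\<times>Y. h p) = (\<Sum>x\<in>X. \<Sum>y\<in>Y. h (x,y))"
  by (subst sum.cartesian_product) simp

lemma fiber2:
  assumes "finite X" "finite Y"
  shows "(real (card X) * real (card Y))^2 \<le> real (card (f ` (X \<times> Y))) *
     (\<Sum>y\<in>Y. \<Sum>y'\<in>Y. \<Sum>x\<in>X. \<Sum>x'\<in>X. of_bool (f (x,y) = f (x',y')))"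
proof -
  have "(real (card X) * real (card Y))^2 = real (card (X \<times> Y))^2" by (simp add: card_cartesian_product)
  also have "\<dots> \<le> real (card (f ` (X \<times> Y))) * (\<Sum>p\<in>X\<times>Y. \<Sum>q\<in>X\<times>Y. if f p = f q then 1 else 0)"
    by (rule fiber_cs) (use assms in simp)
  also have "(\<Sum>p\<in>X\<times>Y. \<Sum>q\<in>X\<times>Y. if f p = f q then 1 else (0::real))
      = (\<Sum>x\<in>X. \<Sum>y\<in>Y. \<Sum>x'\<in>X. \<Sum>y'\<in>Y. of_bool (f (x,y) = f (x',y')))"
    by (simp add: sum_prod of_bool_def)
  also have "\<dots> = (\<Sum>y\<in>Y. \<Sum>x\<in>X. \<Sum>x'\<in>X. \<Sum>y'\<in>Y. of_bool (f (x,y) = f (x',y')))"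
    by (rule sum.swap)
  also have "\<dots> = (\<Sum>y\<in>Y. \<Sum>x\<in>X. \<Sum>y'\<in>Y. \<Sum>x'\<in>X. of_bool (f (x,y) = f (x',y')))"
    by (intro sum.cong refl) (rule sum.swap)
  also have "\<dots> = (\<Sum>y\<in>Y. \<Sum>y'\<in>Y. \<Sum>x\<in>X. \<Sum>x'\<in>X. of_bool (f (x,y) = f (x',y')))"
    by (intro sum.cong refl) (rule sum.swap)
  finally show ?thesis .
qed

lemma sum_Ash:
  "finite A \<Longrightarrow> (\<Sum>b\<in>Ash A s. F b) = (\<Sum>b\<in>A. of_bool (b + s \<in> A) * (F b :: real))"
  unfolding Ash_eq by (simp add: sum.inter_filter ob)

lemma dbl:
  assumes fin: "finite A"
  shows "(\<Sum>x\<in>Ash A s. \<Sum>x'\<in>Ash A s. F x x') = (\<Sum>x\<in>A. \<Sum>x'\<in>A. of_bool (x + s \<in> A \<and> x' + s \<in> A) * (F x x' :: real))"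
proof -
  have "(\<Sum>x\<in>Ash A s. \<Sum>x'\<in>Ash A s. F x x') = (\<Sum>x\<in>A. of_bool (x + s \<in> A) * (\<Sum>x'\<in>A. of_bool (x' + s \<in> A) * F x x'))"
    by (simp only: sum_Ash[OF fin])
  also have "\<dots> = (\<Sum>x\<in>A. \<Sum>x'\<in>A. of_bool (x + s \<in> A \<and> x' + s \<in> A) * F x x')"
    by (simp add: sum_distrib_left of_bool_conj mult.assoc)
  finally show ?thesis .
qed

lemma eq_shift: "(x + (p::'a::ab_group_add) = x' + q) = (x - x' = q - p)"
  by (auto simp: algebra_simps)

lemma swap3: "(\<Sum>s\<in>D. \<Sum>b\<in>A. \<Sum>b'\<in>B. f s b b') = (\<Sum>b\<in>A. \<Sum>b'\<in>B. \<Sum>s\<in>D. f s b b')"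
  by (subst sum.swap) (intro sum.cong refl, rule sum.swap)

definition Nf :: "'a::ab_group_add set \<Rightarrow> 'a \<Rightarrow> real" where
  "Nf A s = (\<Sum>b\<in>A. \<Sum>b'\<in>A. of_bool (b + s \<in> A \<and> b' + s \<in> A) * real (rep A (b' - b)))"

definition Mf :: "'a::ab_group_add set \<Rightarrow> ('a \<Rightarrow> 'a) \<Rightarrow> 'a \<Rightarrow> 'a \<Rightarrow> real" where
  "Mf A \<phi> s t = (\<Sum>c\<in>A. \<Sum>c'\<in>A. of_bool (c + t \<in> A \<and> c' + t \<in> A) *
     (\<Sum>b\<in>A. \<Sum>b'\<in>A. of_bool (b + s \<in> A \<and> b' + s \<in> A) * of_bool (b - b' = \<phi> (c' - c))))"

lemma part1:
  fixes \<phi> :: "'a::ab_group_add \<Rightarrow> 'a"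
  assumes fin: "finite A" and phi: "\<And>x y. \<phi> x - \<phi> y = \<phi> (x - y)" and phir: "\<And>x. rep A (\<phi> x) = rep A x"
  shows "(real (card A) * real (rep A s))^2 \<le> real (card ((\<lambda>(a,b). a + \<phi> b) ` (A \<times> Ash A s))) * Nf A s"
proof -
  have finS: "finite (Ash A s)" using fin unfolding Ash_eq by simp
  have inner: "(\<Sum>x\<in>A. \<Sum>x'\<in>A. of_bool ((\<lambda>(a,b). a + \<phi> b) (x,y) = (\<lambda>(a,b). a + \<phi> b) (x',y')))
       = real (rep A (y' - y))" for y y'
  proof -
    have "\<And>x x'. (x + \<phi> y = x' + \<phi> y') = (x - x' = \<phi> (y' - y))"
      by (simp add: eq_shift phi)
    then have "(\<Sum>x\<in>A. \<Sum>x'\<in>A. of_bool ((\<lambda>(a,b). a + \<phi> b) (x,y) = (\<lambda>(a,b). a + \<phi> b) (x',y')))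
       = (\<Sum>x\<in>A. \<Sum>x'\<in>A. of_bool (x - x' = \<phi> (y' - y)) * (\<lambda>_. 1::real) (x' - x))" by simp
    also have "\<dots> = real (rep A (\<phi> (y' - y)))" using pair_count[OF fin, of "\<phi> (y' - y)" "\<lambda>_. 1"] by simp
    finally show ?thesis by (simp add: phir)
  qed
  have "(real (card A) * real (rep A s))^2 \<le> real (card ((\<lambda>(a,b). a + \<phi> b) ` (A \<times> Ash A s))) *
     (\<Sum>y\<in>Ash A s. \<Sum>y'\<in>Ash A s. \<Sum>x\<in>A. \<Sum>x'\<in>A. of_bool ((\<lambda>(a,b). a + \<phi> b) (x,y) = (\<lambda>(a,b). a + \<phi> b) (x',y')))"
    using fiber2[OF fin finS, of "\<lambda>(a,b). a + \<phi> b"] by (simp add: card_Ash)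
  also have "(\<Sum>y\<in>Ash A s. \<Sum>y'\<in>Ash A s. \<Sum>x\<in>A. \<Sum>x'\<in>A. of_bool ((\<lambda>(a,b). a + \<phi> b) (x,y) = (\<lambda>(a,b). a + \<phi> b) (x',y')))
     = Nf A s"
    unfolding inner Nf_def by (simp only: dbl[OF fin])
  finally show ?thesis .
qed

lemma sum1:
  assumes fin: "finite A"
  shows "(\<Sum>s\<in>diffset A A - {0}. Nf A s) = (\<Sum>b\<in>A. \<Sum>b'\<in>A. real (rep A (b' - b)) * (real (rep A (b' - b)) - 1))"
proof -
  have "(\<Sum>s\<in>diffset A A - {0}. Nf A s) = (\<Sum>b\<in>A. \<Sum>b'\<in>A. \<Sum>s\<in>diffset A A - {0}. of_bool (b + s \<in> A \<and> b' + s \<in> A) * real (rep A (b' - b)))"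
    unfolding Nf_def by (rule swap3)
  also have "\<dots> = (\<Sum>b\<in>A. \<Sum>b'\<in>A. real (rep A (b' - b)) * (real (rep A (b' - b)) - 1))"
    proof (intro sum.cong refl)
    fix b b' assume bb: "b \<in> A" "b' \<in> A"
    show "(\<Sum>s\<in>diffset A A - {0}. of_bool (b + s \<in> A \<and> b' + s \<in> A) * real (rep A (b' - b))) =
      real (rep A (b' - b)) * (real (rep A (b' - b)) - 1)"
      by (subst sum_distrib_right[symmetric]) (simp add: count_s[OF fin bb] mult.commute)
  qed
  finally show ?thesis .
qed

lemma part2:
  fixes \<phi> :: "'a::ab_group_add \<Rightarrow> 'a"
  assumes fin: "finite A" and phi: "\<And>x y. \<phi> x - \<phi> y = \<phi> (x - y)"
  shows "(real (rep A s) * real (rep A t))^2 \<le> real (card ((\<lambda>(a,b). a + \<phi> b) ` (Ash A s \<times> Ash A t))) * Mf A \<phi> s t"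
proof -
  have finS: "finite (Ash A s)" "finite (Ash A t)" using fin unfolding Ash_eq by simp_all
  have eq: "\<And>x x' y y'. ((\<lambda>(a,b). a + \<phi> b) (x,y) = (\<lambda>(a,b). a + \<phi> b) (x',y')) = (x - x' = \<phi> (y' - y))"
    by (simp add: eq_shift phi)
  have "(real (rep A s) * real (rep A t))^2 \<le> real (card ((\<lambda>(a,b). a + \<phi> b) ` (Ash A s \<times> Ash A t))) *
     (\<Sum>y\<in>Ash A t. \<Sum>y'\<in>Ash A t. \<Sum>x\<in>Ash A s. \<Sum>x'\<in>Ash A s. of_bool ((\<lambda>(a,b). a + \<phi> b) (x,y) = (\<lambda>(a,b). a + \<phi> b) (x',y')))"
    using fiber2[OF finS, of "\<lambda>(a,b). a + \<phi> b"] by (simp add: card_Ash)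
  also have "(\<Sum>y\<in>Ash A t. \<Sum>y'\<in>Ash A t. \<Sum>x\<in>Ash A s. \<Sum>x'\<in>Ash A s. of_bool ((\<lambda>(a,b). a + \<phi> b) (x,y) = (\<lambda>(a,b). a + \<phi> b) (x',y')))
     = Mf A \<phi> s t"
    unfolding eq Mf_def by (simp only: dbl[OF fin])
  finally show ?thesis .
qed

lemma sum2:
  fixes \<phi> :: "'a::ab_group_add \<Rightarrow> 'a"
  assumes fin: "finite A" and phir: "\<And>x. rep A (\<phi> x) = rep A x"
  shows "(\<Sum>s\<in>diffset A A - {0}. \<Sum>t\<in>diffset A A - {0}. Mf A \<phi> s t)
     = (\<Sum>c\<in>A. \<Sum>c'\<in>A. real (rep A (c' - c)) * (real (rep A (c' - c)) - 1)^2)"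
proof -
  let ?D = "diffset A A - {0}"
  let ?r = "\<lambda>x. real (rep A x)"
  have inner: "(\<Sum>s\<in>?D. \<Sum>b\<in>A. \<Sum>b'\<in>A. of_bool (b + s \<in> A \<and> b' + s \<in> A) * of_bool (b - b' = e))
     = ?r e * (?r e - 1)" for e
  proof -
    have "(\<Sum>s\<in>?D. \<Sum>b\<in>A. \<Sum>b'\<in>A. of_bool (b + s \<in> A \<and> b' + s \<in> A) * of_bool (b - b' = e))
      = (\<Sum>b\<in>A. \<Sum>b'\<in>A. \<Sum>s\<in>?D. of_bool (b + s \<in> A \<and> b' + s \<in> A) * of_bool (b - b' = e))"
      by (rule swap3)
    also have "\<dots> = (\<Sum>b\<in>A. \<Sum>b'\<in>A. of_bool (b - b' = e) * (\<lambda>x. ?r x - 1) (b' - b))"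
    proof (intro sum.cong refl)
      fix b b' assume bb: "b \<in> A" "b' \<in> A"
      show "(\<Sum>s\<in>?D. of_bool (b + s \<in> A \<and> b' + s \<in> A) * of_bool (b - b' = e)) =
        of_bool (b - b' = e) * (\<lambda>x. ?r x - 1) (b' - b)"
        by (subst sum_distrib_right[symmetric]) (simp add: count_s[OF fin bb] mult.commute)
    qed
    also have "\<dots> = ?r e * (?r e - 1)"
      by (subst pair_count[OF fin]) (simp add: rep_neg)
    finally show ?thesis .
  qed
  have "(\<Sum>s\<in>?D. \<Sum>t\<in>?D. Mf A \<phi> s t) = (\<Sum>t\<in>?D. \<Sum>s\<in>?D. Mf A \<phi> s t)"
    by (rule sum.swap)
  also have "\<dots> = (\<Sum>t\<in>?D. \<Sum>c\<in>A. \<Sum>c'\<in>A. of_bool (c + t \<in> A \<and> c' + t \<in> A) *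
       (\<Sum>s\<in>?D. \<Sum>b\<in>A. \<Sum>b'\<in>A. of_bool (b + s \<in> A \<and> b' + s \<in> A) * of_bool (b - b' = \<phi> (c' - c))))"
    unfolding Mf_def by (intro sum.cong[OF refl]) (subst swap3, simp add: sum_distrib_left)
  also have "\<dots> = (\<Sum>t\<in>?D. \<Sum>c\<in>A. \<Sum>c'\<in>A. of_bool (c + t \<in> A \<and> c' + t \<in> A) * (?r (c' - c) * (?r (c' - c) - 1)))"
    unfolding inner phir ..
  also have "\<dots> = (\<Sum>c\<in>A. \<Sum>c'\<in>A. (\<Sum>t\<in>?D. of_bool (c + t \<in> A \<and> c' + t \<in> A)) * (?r (c' - c) * (?r (c' - c) - 1)))"
    by (subst swap3, simp add: sum_distrib_right)
  also have "\<dots> = (\<Sum>c\<in>A. \<Sum>c'\<in>A. ?r (c' - c) * (?r (c' - c) - 1)^2)"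
    by (intro sum.cong refl) (simp add: count_s[OF fin] power2_eq_square)
  finally show ?thesis .
qed

lemma sum_rep_D:
  assumes fin: "finite A" and ne: "A \<noteq> {}"
  shows "(\<Sum>s\<in>diffset A A - {0}. real (rep A s)) = real (card A)^2 - real (card A)"
proof -
  have z: "0 \<in> diffset A A" using ne unfolding diffset_def by force
  have "real (card A)^2 = (\<Sum>b\<in>A. \<Sum>b'\<in>A. (\<lambda>_. 1::real) (b' - b))" by (simp add: power2_eq_square)
  also have "\<dots> = (\<Sum>d\<in>diffset A A. real (rep A d))" by (subst grouping[OF fin]) simp
  also have "\<dots> = real (rep A 0) + (\<Sum>s\<in>diffset A A - {0}. real (rep A s))"
    using sum.remove[OF diffset_finite[OF fin] z] by simp
  finally show ?thesis by (simp add: rep0)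
qed

lemma E3_eq: "finite A \<Longrightarrow> real (E3 A) = (\<Sum>b\<in>A. \<Sum>b'\<in>A. real (rep A (b' - b))^2)"
  by (subst grouping) (simp_all add: E3_def power_def)

lemma E4_eq: "finite A \<Longrightarrow> real (E4 A) = (\<Sum>b\<in>A. \<Sum>b'\<in>A. real (rep A (b' - b))^3)"
  by (subst grouping) (simp_all add: E4_def power_def)

lemma Nf_nonneg: "0 \<le> Nf A s" unfolding Nf_def by (intro sum_nonneg) simp
lemma Mf_nonneg: "0 \<le> Mf A \<phi> s t" unfolding Mf_def by (intro sum_nonneg mult_nonneg_nonneg) simp_all

lemma main1:
  fixes \<phi> :: "'a::ab_group_add \<Rightarrow> 'a"
  assumes fin: "finite A" and two: "card A \<ge> 2" and phi: "\<And>x y. \<phi> x - \<phi> y = \<phi> (x - y)"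
    and phir: "\<And>x. rep A (\<phi> x) = rep A x"
  shows "real (card A)^6 / (2 * real (E3 A)) \<le>
     (\<Sum>s\<in>diffset A A - {0}. real (card ((\<lambda>(a,b). a + \<phi> b) ` (A \<times> Ash A s))))"
proof -
  let ?D = "diffset A A - {0}"
  define n where "n = real (card A)"
  define S where "S = (\<Sum>s\<in>?D. real (card ((\<lambda>(a,b). a + \<phi> b) ` (A \<times> Ash A s))))"
  define P where "P = (\<Sum>s\<in>?D. Nf A s)"
  define E where "E = real (E3 A)"
  have n2: "n \<ge> 2" using two unfolding n_def by simp
  have ne: "A \<noteq> {}" using two by auto
  have h1: "(\<Sum>s\<in>?D. n * real (rep A s))^2 \<le> S * P"
    unfolding S_def P_def n_def
    by (rule cs_sum) (auto intro: part1[OF fin phi phir] Nf_nonneg)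
  have "(\<Sum>s\<in>?D. n * real (rep A s)) = n * (n^2 - n)"
    using sum_rep_D[OF fin ne] by (simp add: sum_distrib_left[symmetric] n_def)
  with h1 have h1': "n^2 * (n^2 - n)^2 \<le> S * P" by (simp add: power_mult_distrib)
  have h2: "n * P \<le> (n - 1) * E"
  proof -
    have "n * P = (\<Sum>b\<in>A. \<Sum>b'\<in>A. n * (real (rep A (b' - b)) * (real (rep A (b' - b)) - 1)))"
      unfolding P_def sum1[OF fin] by (simp add: sum_distrib_left)
    also have "\<dots> \<le> (\<Sum>b\<in>A. \<Sum>b'\<in>A. (n - 1) * real (rep A (b' - b))^2)"
    proof (intro sum_mono)
      fix b b'
      define r where "r = real (rep A (b' - b))"
      have "r \<le> n" using rep_le[OF fin] unfolding n_def r_def by simp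
      moreover have "0 \<le> r" unfolding r_def by simp
      ultimately have "0 \<le> r * (n - r)" by simp
      moreover have "(n - 1) * r^2 - n * (r * (r - 1)) = r * (n - r)" by algebra
      ultimately show "n * (real (rep A (b' - b)) * (real (rep A (b' - b)) - 1)) \<le> (n - 1) * real (rep A (b' - b))^2"
        unfolding r_def[symmetric] by linarith
    qed
    also have "\<dots> = (n - 1) * E" unfolding E_def E3_eq[OF fin] by (simp add: sum_distrib_left)
    finally show ?thesis .
  qed
  have S0: "0 \<le> S" unfolding S_def by (simp add: sum_nonneg)
  have P0: "0 \<le> P" unfolding P_def by (simp add: sum_nonneg Nf_nonneg)
  have "n * (n^2 * (n^2 - n)^2) \<le> n * (S * P)"
    by (rule mult_left_mono[OF h1']) (use n2 in simp)
  also have "\<dots> = S * (n * P)" by simp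
  also have "\<dots> \<le> S * ((n - 1) * E)" using mult_left_mono[OF h2 S0] .
  finally have h3: "n * (n^2 * (n^2 - n)^2) \<le> S * ((n - 1) * E)" .
  have e1: "n * (n^2 * (n^2 - n)^2) = (n^5 * (n - 1)) * (n - 1)" by algebra
  have e2: "S * ((n - 1) * E) = (S * E) * (n - 1)" by algebra
  have "(n^5 * (n - 1)) * (n - 1) \<le> (S * E) * (n - 1)" using h3 unfolding e1 e2 .
  moreover have "0 < n - 1" using n2 by simp
  ultimately have "n^5 * (n - 1) \<le> S * E" by (rule mult_right_le_imp_le)
  moreover have "n^6 \<le> 2 * (n^5 * (n - 1))"
  proof -
    have "n * n^5 \<le> (2 * (n - 1)) * n^5" using n2 by (intro mult_right_mono) auto
    moreover have "n * n^5 = n^6" by algebra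
    moreover have "(2 * (n - 1)) * n^5 = 2 * (n^5 * (n - 1))" by algebra
    ultimately show ?thesis by (simp only:)
  qed
  ultimately have h4: "n^6 \<le> 2 * (S * E)" by linarith
  have "0 < n^6" using n2 by simp
  have "E \<noteq> 0"
  proof
    assume "E = 0" then have "n^6 \<le> 0" using h4 by simp
    with \<open>0 < n^6\<close> show False by simp
  qed
  moreover have "0 \<le> E" unfolding E_def by simp
  ultimately have E0: "0 < E" by simp
  have "n^6 \<le> S * (2 * E)" using h4 by (simp add: mult.left_commute)
  then have "n^6 / (2 * E) \<le> S" using E0 by (simp add: pos_divide_le_eq)
  then show ?thesis unfolding S_def n_def E_def .
qed

lemma main2:
  fixes \<phi> :: "'a::ab_group_add \<Rightarrow> 'a"
  assumes fin: "finite A" and two: "card A \<ge> 2" and phi: "\<And>x y. \<phi> x - \<phi> y = \<phi> (x - y)"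
    and phir: "\<And>x. rep A (\<phi> x) = rep A x"
  shows "real (card A)^8 / (4 * real (E4 A)) \<le>
     (\<Sum>s\<in>diffset A A - {0}. \<Sum>t\<in>diffset A A - {0}. real (card ((\<lambda>(a,b). a + \<phi> b) ` (Ash A s \<times> Ash A t))))"
proof -
  let ?D = "diffset A A - {0}"
  define n where "n = real (card A)"
  define S where "S = (\<Sum>s\<in>?D. \<Sum>t\<in>?D. real (card ((\<lambda>(a,b). a + \<phi> b) ` (Ash A s \<times> Ash A t))))"
  define P where "P = (\<Sum>s\<in>?D. \<Sum>t\<in>?D. Mf A \<phi> s t)"
  define E where "E = real (E4 A)"
  have n2: "n \<ge> 2" using two unfolding n_def by simp
  have ne: "A \<noteq> {}" using two by auto
  have h1: "(\<Sum>p\<in>?D \<times> ?D. real (rep A (fst p)) * real (rep A (snd p)))^2 \<le>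
      (\<Sum>p\<in>?D \<times> ?D. real (card ((\<lambda>(a,b). a + \<phi> b) ` (Ash A (fst p) \<times> Ash A (snd p))))) *
      (\<Sum>p\<in>?D \<times> ?D. Mf A \<phi> (fst p) (snd p))"
    by (rule cs_sum) (auto intro: part2[OF fin phi] Mf_nonneg)
  have "(\<Sum>p\<in>?D \<times> ?D. real (rep A (fst p)) * real (rep A (snd p))) = (\<Sum>s\<in>?D. real (rep A s)) * (\<Sum>t\<in>?D. real (rep A t))"
    by (simp add: sum_prod sum_product)
  also have "\<dots> = (n^2 - n)^2" using sum_rep_D[OF fin ne] by (simp add: n_def power2_eq_square)
  finally have h1': "((n^2 - n)^2)^2 \<le> S * P"
    using h1 unfolding S_def P_def by (simp add: sum_prod)
  have h2: "n^2 * P \<le> (n - 1)^2 * E"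
  proof -
    have "n^2 * P = (\<Sum>b\<in>A. \<Sum>b'\<in>A. n^2 * (real (rep A (b' - b)) * (real (rep A (b' - b)) - 1)^2))"
      unfolding P_def sum2[OF fin phir] by (simp add: sum_distrib_left)
    also have "\<dots> \<le> (\<Sum>b\<in>A. \<Sum>b'\<in>A. (n - 1)^2 * real (rep A (b' - b))^3)"
    proof (intro sum_mono)
      fix b b' assume bb: "b \<in> A" "b' \<in> A"
      define r where "r = real (rep A (b' - b))"
      have rn: "r \<le> n" using rep_le[OF fin] unfolding n_def r_def by simp
      have r1: "1 \<le> r" using rep_pos[OF bb fin] unfolding r_def by simp
      have a0: "0 \<le> n * (r - 1)" using r1 n2 by simp
      have "(n - 1) * r - n * (r - 1) = n - r" by algebra
      then have "n * (r - 1) \<le> (n - 1) * r" using rn by linarith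
      then have "(n * (r - 1))^2 \<le> ((n - 1) * r)^2" using a0 by (rule power_mono)
      then have "r * (n * (r - 1))^2 \<le> r * ((n - 1) * r)^2" using r1 by (intro mult_left_mono) auto
      moreover have "n^2 * (r * (r - 1)^2) = r * (n * (r - 1))^2" by algebra
      moreover have "(n - 1)^2 * r^3 = r * ((n - 1) * r)^2" by algebra
      ultimately show "n^2 * (real (rep A (b' - b)) * (real (rep A (b' - b)) - 1)^2) \<le> (n - 1)^2 * real (rep A (b' - b))^3"
        unfolding r_def[symmetric] by (simp only:)
    qed
    also have "\<dots> = (n - 1)^2 * E" unfolding E_def E4_eq[OF fin] by (simp add: sum_distrib_left)
    finally show ?thesis .
  qed
  have S0: "0 \<le> S" unfolding S_def by (simp add: sum_nonneg)
  have "n^2 * ((n^2 - n)^2)^2 \<le> n^2 * (S * P)"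
    by (rule mult_left_mono[OF h1']) simp
  also have "\<dots> = S * (n^2 * P)" by simp
  also have "\<dots> \<le> S * ((n - 1)^2 * E)" using mult_left_mono[OF h2 S0] .
  finally have h3: "n^2 * ((n^2 - n)^2)^2 \<le> S * ((n - 1)^2 * E)" .
  have e1: "n^2 * ((n^2 - n)^2)^2 = (n^6 * (n - 1)^2) * (n - 1)^2" by algebra
  have e2: "S * ((n - 1)^2 * E) = (S * E) * (n - 1)^2" by algebra
  have "(n^6 * (n - 1)^2) * (n - 1)^2 \<le> (S * E) * (n - 1)^2" using h3 unfolding e1 e2 .
  moreover have "0 < (n - 1)^2" using n2 by simp
  ultimately have h3': "n^6 * (n - 1)^2 \<le> S * E" by (rule mult_right_le_imp_le)
  moreover have "n^8 \<le> 4 * (n^6 * (n - 1)^2)"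
  proof -
    have "n \<le> 2 * (n - 1)" using n2 by simp
    then have "n^2 \<le> (2 * (n - 1))^2" using n2 by (intro power_mono) auto
    then have "n^2 * n^6 \<le> (2 * (n - 1))^2 * n^6" by (intro mult_right_mono) auto
    moreover have "n^2 * n^6 = n^8" by algebra
    moreover have "(2 * (n - 1))^2 * n^6 = 4 * (n^6 * (n - 1)^2)" by algebra
    ultimately show ?thesis by (simp only:)
  qed
  ultimately have h4: "n^8 \<le> 4 * (S * E)" by linarith
  have "0 < n^8" using n2 by simp
  have "E \<noteq> 0"
  proof
    assume "E = 0" then have "n^8 \<le> 0" using h4 by simp
    with \<open>0 < n^8\<close> show False by simp
  qed
  moreover have "0 \<le> E" unfolding E_def by simp
  ultimately have E0: "0 < E" by simp
  have "n^8 \<le> S * (4 * E)" using h4 by (simp add: mult.left_commute)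
  then have "n^8 / (4 * E) \<le> S" using E0 by (simp add: pos_divide_le_eq)
  then show ?thesis unfolding S_def n_def E_def .
qed

lemma avg:
  fixes X :: "'i \<Rightarrow> real"
  assumes "finite I" "I \<noteq> {}" "real (card I) \<le> K" "0 < K" "0 \<le> B" "B \<le> (\<Sum>i\<in>I. X i)"
  shows "\<exists>i\<in>I. B / K \<le> X i"
proof (rule ccontr)
  assume "\<not> ?thesis"
  then have lt: "\<And>i. i \<in> I \<Longrightarrow> X i < B / K" by auto
  have "(\<Sum>i\<in>I. X i) < (\<Sum>i\<in>I. B / K)" using assms(1,2) lt by (intro sum_strict_mono) auto
  also have "\<dots> = real (card I) * (B / K)" by simp
  also have "\<dots> \<le> K * (B / K)" using assms(3,4,5) by (intro mult_right_mono) auto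
  also have "\<dots> = B" using assms(4) by simp
  finally show False using assms(6) by simp
qed

lemma sumset_img: "sumset X Y = (\<lambda>(a,b). a + b) ` (X \<times> Y)"
  unfolding sumset_def by force

lemma diffset_img: "diffset X Y = (\<lambda>(a,b). a + - b) ` (X \<times> Y)"
  unfolding diffset_def by force

theorem corollary3p2:
  fixes A :: "'a::ab_group_add set"
  assumes "finite A" and "card A \<ge> 2"
  defines "D \<equiv> diffset A A - {0}"
  shows "(\<Sum>s\<in>D. real (card (sumset A (Ash A s)))) \<ge> real (card A) ^ 6 / (2 * real (E3 A))
       \<and> (\<Sum>s\<in>D. real (card (diffset A (Ash A s)))) \<ge> real (card A) ^ 6 / (2 * real (E3 A))
       \<and> (\<Sum>s\<in>D. \<Sum>t\<in>D. real (card (sumset (Ash A s) (Ash A t)))) \<ge> real (card A) ^ 8 / (4 * real (E4 A))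
       \<and> (\<Sum>s\<in>D. \<Sum>t\<in>D. real (card (diffset (Ash A s) (Ash A t)))) \<ge> real (card A) ^ 8 / (4 * real (E4 A))
       \<and> (\<exists>s\<in>D. real (card (diffset A (Ash A s)))
              \<ge> real (card A) ^ 6 / (2 * real (E3 A) * real (card (diffset A A))))
       \<and> (\<exists>s\<in>D. \<exists>t\<in>D. real (card (diffset (Ash A s) (Ash A t)))
              \<ge> real (card A) ^ 8 / (4 * real (E4 A) * real (card (diffset A A)) ^ 2))"
proof -
  note fin = assms(1) and two = assms(2)
  have id1: "\<And>x y. (\<lambda>x::'a. x) x - (\<lambda>x. x) y = (\<lambda>x. x) (x - y)" by simp
  have id2: "\<And>x. rep A ((\<lambda>x::'a. x) x) = rep A x" by simp
  have ng1: "\<And>x y::'a. - x - - y = - (x - y)" by simp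
  have ng2: "\<And>x. rep A (- x) = rep A x" by (rule rep_neg)
  have P1: "(\<Sum>s\<in>D. real (card (sumset A (Ash A s)))) \<ge> real (card A) ^ 6 / (2 * real (E3 A))"
    using main1[OF fin two id1 id2] unfolding D_def sumset_img by simp
  have P2: "(\<Sum>s\<in>D. real (card (diffset A (Ash A s)))) \<ge> real (card A) ^ 6 / (2 * real (E3 A))"
    using main1[OF fin two ng1 ng2] unfolding D_def diffset_img by simp
  have P3: "(\<Sum>s\<in>D. \<Sum>t\<in>D. real (card (sumset (Ash A s) (Ash A t)))) \<ge> real (card A) ^ 8 / (4 * real (E4 A))"
    using main2[OF fin two id1 id2] unfolding D_def sumset_img by simp
  have P4: "(\<Sum>s\<in>D. \<Sum>t\<in>D. real (card (diffset (Ash A s) (Ash A t)))) \<ge> real (card A) ^ 8 / (4 * real (E4 A))"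
    using main2[OF fin two ng1 ng2] unfolding D_def diffset_img by simp
  have finDD: "finite (diffset A A)" using diffset_finite[OF fin] .
  have finD: "finite D" unfolding D_def using finDD by simp
  obtain a where a: "a \<in> A" using two by (metis card.empty ex_in_conv not_numeral_le_zero)
  have "card (A - {a}) \<ge> 1" using two a fin by simp
  then obtain b where b: "b \<in> A" "b \<noteq> a" by (metis One_nat_def card.empty DiffE ex_in_conv insertCI not_one_le_zero)
  have "a - b \<in> D" unfolding D_def diffset_def using a b by auto
  then have Dne: "D \<noteq> {}" by auto
  have cD: "card D \<le> card (diffset A A)" unfolding D_def using finDD by (intro card_mono) auto
  have K0: "0 < real (card (diffset A A))" using finDD Dne cD by (auto simp: D_def card_gt_0_iff)
  have B0: "0 \<le> real (card A) ^ 6 / (2 * real (E3 A))" by simp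
  have B0': "0 \<le> real (card A) ^ 8 / (4 * real (E4 A))" by simp
  obtain s where "s \<in> D" "real (card A) ^ 6 / (2 * real (E3 A)) / real (card (diffset A A)) \<le> real (card (diffset A (Ash A s)))"
    using avg[OF finD Dne _ K0 B0 P2] cD by auto
  then have P5: "\<exists>s\<in>D. real (card (diffset A (Ash A s)))
              \<ge> real (card A) ^ 6 / (2 * real (E3 A) * real (card (diffset A A)))"
    by (auto simp: divide_divide_eq_left)
  have P4': "real (card A) ^ 8 / (4 * real (E4 A)) \<le> (\<Sum>p\<in>D \<times> D. real (card (diffset (Ash A (fst p)) (Ash A (snd p)))))"
    using P4 by (simp add: sum_prod)
  have cDD: "real (card (D \<times> D)) \<le> real (card (diffset A A))^2"
    using cD by (simp add: card_cartesian_product power2_eq_square mult_mono)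
  have K0': "0 < real (card (diffset A A))^2" using K0 by simp
  have "\<exists>p\<in>D \<times> D. real (card A) ^ 8 / (4 * real (E4 A)) / real (card (diffset A A))^2 \<le> real (card (diffset (Ash A (fst p)) (Ash A (snd p))))"
    by (rule avg[OF _ _ cDD K0' B0' P4']) (use finD Dne in auto)
  then have P6: "\<exists>s\<in>D. \<exists>t\<in>D. real (card (diffset (Ash A s) (Ash A t)))
              \<ge> real (card A) ^ 8 / (4 * real (E4 A) * real (card (diffset A A)) ^ 2)"
    by (auto simp: divide_divide_eq_left)
  show ?thesis using P1 P2 P3 P4 P5 P6 by blast
qed

end
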